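(* Let $M\ge1$ and let $F_1,\dots,F_M:\mathbb{R}^d\to\mathbb{R}$ be differentiable functions, each with $L$-Lipschitz continuous gradient ($L>0$) and each $\Upsilon$-strongly convex ($\Upsilon>0$). Let $w_1,\dots,w_M>0$ with $\sum_m w_m=1$, define the global loss $\mathcal{L}(\theta)=\sum_{m=1}^M w_m F_m(\theta)$ and let $\theta^*$ be its minimizer. Fix $\epsilon_{\mathrm{Local}}\in(0,1)$, $\epsilon_{\mathrm{UAV}}\in(0,1)$ and $\varrho$ with $0<\varrho\le \Upsilon/L$. Let $\theta[0]\in\mathbb{R}^d$ and generate a sequence as follows: given $\theta[n]$, for each $m$ define the local objective $$G_{m,n}(h)=F_m(\theta[n]+h)-\bigl(\nabla F_m(\theta[n])-\varrho\nabla\mathcal{L}(\theta[n])\bigr)^{\mathsf T}h,$$ let $h_m[n]$ be any vector satisfying $$G_{m,n}(h_m[n])-\min_h G_{m,n}(h)\le \epsilon_{\mathrm{Local}}\Bigl(G_{m,n}(0)-\min_h G_{m,n}(h)\Bigr),$$ and set $\theta[n+1]=\theta[n]+\frac{1}{M}\sum_{m=1}^M h_m[n]$. Define $$\check N=\frac{2L^2}{\Upsilon^2\varrho(1-\epsilon_{\mathrm{Local}})}\ln\!\left(\frac{1}{\epsilon_{\mathrm{UAV}}}\right).$$ Then for every integer $n\ge\check N$, $$\mathcal{L}(\theta[n])-\mathcal{L}(\theta^* )\le\epsilon_{\mathrm{UAV}}\bigl(\mathcal{L}(\theta[0])-\mathcal{L}(\theta^* )\bigr),$$ i.e. $\check N$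 global (UAV) aggregation rounds suffice to reach global accuracy $\epsilon_{\mathrm{UAV}}$.
   Context: This models federated learning with $M$ IoT devices and a UAV acting as aggregation server: $F_m$ is the local loss of device $m$ on its dataset $\mathcal{D}_m$, the weights are $w_m=|\mathcal{D}_m|/\sum_k|\mathcal{D}_k|$, $h_m[n]$ is the local model update of device $m$ computed to local accuracy $\epsilon_{\mathrm{Local}}$, and the UAV aggregates by averaging the updates. $\Upsilon$-strong convexity means $F(y)\ge F(x)+\nabla F(x)^{\mathsf T}(y-x)+\frac{\Upsilon}{2}\|y-x\|^2$ for all $x,y$. *)

theory Defs
  imports "HOL-Analysis.Analysis"
begin

definition has_gradient_everywhere :: "('a::euclidean_space \<Rightarrow> real) \<Rightarrow> ('a \<Rightarrow> 'a) \<Rightarrow> bool" where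
  "has_gradient_everywhere f g \<longleftrightarrow> (\<forall>x. (f has_derivative (\<lambda>h. g x \<bullet> h)) (at x))"

definition strongly_convex_grad :: "real \<Rightarrow> ('a::euclidean_space \<Rightarrow> real) \<Rightarrow> ('a \<Rightarrow> 'a) \<Rightarrow> bool" where
  "strongly_convex_grad U f g \<longleftrightarrow>
     (\<forall>x y. f y \<ge> f x + g x \<bullet> (y - x) + U / 2 * (norm (y - x))\<^sup>2)"

definition lipschitz_grad :: "real \<Rightarrow> ('a::euclidean_space \<Rightarrow> 'a) \<Rightarrow> bool" where
  "lipschitz_grad L g \<longleftrightarrow> (\<forall>x y. norm (g x - g y) \<le> L * norm (x - y))"

end

theory Submission imports Defs begin
lemma descent:
  fixes f :: "'a::euclidean_space \<Rightarrow> real"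
  assumes gr: "has_gradient_everywhere f g" and lp: "lipschitz_grad L g"
  shows "f y \<le> f x + g x \<bullet> (y - x) + L / 2 * (norm (y - x))\<^sup>2"
proof -
  define d where "d = y - x"
  define \<phi> where "\<phi> t = f (x + t *\<^sub>R d) - t * (g x \<bullet> d) - L / 2 * t\<^sup>2 * (norm d)\<^sup>2" for t :: real
  have D: "DERIV \<phi> t :> (g (x + t *\<^sub>R d) \<bullet> d - g x \<bullet> d - L * t * (norm d)\<^sup>2)" for t
  proof -
    have p: "((\<lambda>t. x + t *\<^sub>R d) has_derivative (\<lambda>s. s *\<^sub>R d)) (at t)"
      by (auto intro!: derivative_eq_intros)
    have fd: "(f has_derivative (\<lambda>h. g (x + t *\<^sub>R d) \<bullet> h)) (at (x + t *\<^sub>R d))"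
      using gr unfolding has_gradient_everywhere_def by blast
    have c: "((\<lambda>t. f (x + t *\<^sub>R d)) has_derivative (\<lambda>s. g (x + t *\<^sub>R d) \<bullet> (s *\<^sub>R d))) (at t)"
      using has_derivative_compose[OF p fd] .
    have c2: "((\<lambda>t. f (x + t *\<^sub>R d)) has_real_derivative (g (x + t *\<^sub>R d) \<bullet> d)) (at t)"
      unfolding has_field_derivative_def using c by (simp add: mult.commute[of _ "g (x + t *\<^sub>R d) \<bullet> d"])
    show ?thesis unfolding \<phi>_def
      by (rule derivative_eq_intros c2 refl | simp)+
  qed
  have "\<phi> 1 \<le> \<phi> 0"
  proof (rule DERIV_nonpos_imp_nonincreasing[of 0 1 \<phi>])
    fix t :: real assume t: "0 \<le> t" "t \<le> 1"
    have "g (x + t *\<^sub>R d) \<bullet> d - g x \<bullet> d = (g (x + t *\<^sub>R d) - g x) \<bullet> d" by (simp add: inner_diff_left)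
    also have "\<dots> \<le> norm (g (x + t *\<^sub>R d) - g x) * norm d" by (rule norm_cauchy_schwarz)
    also have "\<dots> \<le> L * norm (t *\<^sub>R d) * norm d"
      using lp unfolding lipschitz_grad_def by (metis add_diff_cancel_left' mult_right_mono norm_ge_zero)
    also have "\<dots> = L * t * (norm d)\<^sup>2" using t by (simp add: power2_eq_square)
    finally show "\<exists>y. DERIV \<phi> t :> y \<and> y \<le> 0" using D by force
  qed simp
  then show ?thesis unfolding \<phi>_def d_def by (simp add: algebra_simps)
qed
lemma quad_lb:
  fixes U a b :: real
  assumes "0 < U"
  shows "- (a\<^sup>2) / (2 * U) \<le> U / 2 * b\<^sup>2 - a * b"
proof -
  have "0 \<le> (U * b - a)\<^sup>2 / (2 * U)" using assms by simp
  also have "\<dots> = U / 2 * b\<^sup>2 - a * b + a\<^sup>2 / (2 * U)"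
    using assms by (simp add: field_simps power2_eq_square)
  finally show ?thesis by simp
qed

lemma wsum_le:
  fixes d :: "'a::euclidean_space"
  assumes "finite A" "\<And>m. m \<in> A \<Longrightarrow> 0 \<le> w m"
    "\<And>m. m \<in> A \<Longrightarrow> a m \<le> b m + c m \<bullet> d + K" "sum w A = 1"
  shows "(\<Sum>m\<in>A. w m * a m) \<le> (\<Sum>m\<in>A. w m * b m) + (\<Sum>m\<in>A. w m *\<^sub>R c m) \<bullet> d + K"
proof -
  have "(\<Sum>m\<in>A. w m * a m) \<le> (\<Sum>m\<in>A. w m * (b m + c m \<bullet> d + K))"
    by (rule sum_mono) (simp add: assms mult_left_mono)
  also have "\<dots> = (\<Sum>m\<in>A. w m * b m) + (\<Sum>m\<in>A. w m * (c m \<bullet> d)) + (\<Sum>m\<in>A. w m) * K"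
    by (simp add: algebra_simps sum.distrib sum_distrib_right sum_distrib_left)
  also have "\<dots> = (\<Sum>m\<in>A. w m * b m) + (\<Sum>m\<in>A. w m *\<^sub>R c m) \<bullet> d + K"
    using assms(4) by (simp add: inner_sum_left)
  finally show ?thesis .
qed

lemma wsum_ge:
  fixes d :: "'a::euclidean_space"
  assumes "finite A" "\<And>m. m \<in> A \<Longrightarrow> 0 \<le> w m"
    "\<And>m. m \<in> A \<Longrightarrow> a m \<ge> b m + c m \<bullet> d + K" "sum w A = 1"
  shows "(\<Sum>m\<in>A. w m * a m) \<ge> (\<Sum>m\<in>A. w m * b m) + (\<Sum>m\<in>A. w m *\<^sub>R c m) \<bullet> d + K"
proof -
  have "(\<Sum>m\<in>A. w m * a m) \<ge> (\<Sum>m\<in>A. w m * (b m + c m \<bullet> d + K))"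
    by (rule sum_mono) (simp add: assms mult_left_mono)
  moreover have "(\<Sum>m\<in>A. w m * (b m + c m \<bullet> d + K)) = (\<Sum>m\<in>A. w m * b m) + (\<Sum>m\<in>A. w m * (c m \<bullet> d)) + (\<Sum>m\<in>A. w m) * K"
    by (simp add: algebra_simps sum.distrib sum_distrib_right sum_distrib_left)
  moreover have "\<dots> = (\<Sum>m\<in>A. w m * b m) + (\<Sum>m\<in>A. w m *\<^sub>R c m) \<bullet> d + K"
    using assms(4) by (simp add: inner_sum_left)
  ultimately show ?thesis by simp
qed

lemma pow_exp_bound:
  fixes c e :: real and n :: nat
  assumes "0 < c" "c \<le> 1" "0 < e" "e < 1" "real n \<ge> ln (1 / e) / c"
  shows "(1 - c) ^ n \<le> e"
proof -
  have "(1 - c) ^ n \<le> exp (- c) ^ n"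
    by (rule power_mono) (use assms exp_ge_add_one_self[of "-c"] in auto)
  also have "\<dots> = exp (- (c * real n))" by (simp add: exp_of_nat_mult[symmetric] mult.commute)
  also have "\<dots> \<le> exp (ln e)"
  proof -
    have "ln (1 / e) \<le> c * real n" using assms by (simp add: field_simps)
    then have "- (c * real n) \<le> ln e" using assms by (simp add: ln_div)
    then show ?thesis by simp
  qed
  also have "\<dots> = e" using assms by simp
  finally show ?thesis .
qed
theorem proposition2:
  fixes M :: nat
    and F :: "nat \<Rightarrow> 'a::euclidean_space \<Rightarrow> real"
    and gF :: "nat \<Rightarrow> 'a \<Rightarrow> 'a"
    and w :: "nat \<Rightarrow> real"
    and L Ups eps_loc eps_uav rho :: real
    and theta_star :: 'a
    and theta :: "nat \<Rightarrow> 'a"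
    and h :: "nat \<Rightarrow> nat \<Rightarrow> 'a"
  assumes M_pos: "M \<ge> 1"
    and grad: "\<And>m. m \<in> {1..M} \<Longrightarrow> has_gradient_everywhere (F m) (gF m)"
    and L_pos: "L > 0"
    and lip: "\<And>m. m \<in> {1..M} \<Longrightarrow> lipschitz_grad L (gF m)"
    and Ups_pos: "Ups > 0"
    and sconv: "\<And>m. m \<in> {1..M} \<Longrightarrow> strongly_convex_grad Ups (F m) (gF m)"
    and w_pos: "\<And>m. m \<in> {1..M} \<Longrightarrow> w m > 0"
    and w_sum: "(\<Sum>m=1..M. w m) = 1"
    and minimizer: "\<And>x. (\<Sum>m=1..M. w m * F m theta_star) \<le> (\<Sum>m=1..M. w m * F m x)"
    and eps_loc: "0 < eps_loc" "eps_loc < 1"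
    and eps_uav: "0 < eps_uav" "eps_uav < 1"
    and rho: "0 < rho" "rho \<le> Ups / L"
    and local_acc: "\<And>n m. m \<in> {1..M} \<Longrightarrow>
        (let G = (\<lambda>v. F m (theta n + v)
                      - (gF m (theta n) - rho *\<^sub>R (\<Sum>k=1..M. w k *\<^sub>R gF k (theta n))) \<bullet> v)
         in G (h m n) - (INF v. G v) \<le> eps_loc * (G 0 - (INF v. G v)))"
    and update: "\<And>n. theta (Suc n) = theta n + (1 / real M) *\<^sub>R (\<Sum>m=1..M. h m n)"
  shows "\<forall>n::nat. real n \<ge> 2 * L\<^sup>2 / (Ups\<^sup>2 * rho * (1 - eps_loc)) * ln (1 / eps_uav) \<longrightarrow>
           (\<Sum>m=1..M. w m * F m (theta n)) - (\<Sum>m=1..M. w m * F m theta_star)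
             \<le> eps_uav * ((\<Sum>m=1..M. w m * F m (theta 0)) - (\<Sum>m=1..M. w m * F m theta_star))"
proof -
  define Lf where "Lf x = (\<Sum>m=1..M. w m * F m x)" for x
  define gL where "gL x = (\<Sum>k=1..M. w k *\<^sub>R gF k x)" for x
  define Ls where "Ls = Lf theta_star"
  have desc: "F m y \<le> F m x + gF m x \<bullet> (y - x) + L / 2 * (norm (y - x))\<^sup>2"
    if "m \<in> {1..M}" for m x y using descent[OF grad[OF that] lip[OF that]] .
  have sc: "F m y \<ge> F m x + gF m x \<bullet> (y - x) + Ups / 2 * (norm (y - x))\<^sup>2"
    if "m \<in> {1..M}" for m x y using sconv[OF that] unfolding strongly_convex_grad_def by blast
  have w_nn: "m \<in> {1..M} \<Longrightarrow> 0 \<le> w m" for m using w_pos[of m] by simp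
  have descL: "Lf y \<le> Lf x + gL x \<bullet> (y - x) + L / 2 * (norm (y - x))\<^sup>2" for x y
    unfolding Lf_def gL_def
    apply (rule wsum_le) apply simp apply (erule w_nn) apply (erule desc) by (rule w_sum)
  have scL: "Lf y \<ge> Lf x + gL x \<bullet> (y - x) + Ups / 2 * (norm (y - x))\<^sup>2" for x y
    unfolding Lf_def gL_def
    apply (rule wsum_ge) apply simp apply (erule w_nn) apply (erule sc) by (rule w_sum)
  have Ls_min: "Ls \<le> Lf x" for x unfolding Ls_def Lf_def using minimizer .
  have UL: "Ups \<le> L"
  proof -
    obtain e :: 'a where e: "e \<in> Basis" using nonempty_Basis by blast
    then have ne: "norm e = 1" by simp
    have 1: "1 \<in> {1..M}" using M_pos by simp
    have "F 1 0 + gF 1 0 \<bullet> (e - 0) + Ups / 2 * (norm (e - 0))\<^sup>2 \<le> F 1 e" using sc[OF 1] .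
    moreover have "F 1 e \<le> F 1 0 + gF 1 0 \<bullet> (e - 0) + L / 2 * (norm (e - 0))\<^sup>2" using desc[OF 1] .
    ultimately show ?thesis using ne by simp
  qed
  define c where "c = (1 - eps_loc) * rho * Ups / L"
  define c' where "c' = (1 - eps_loc) * rho * Ups\<^sup>2 / (2 * L\<^sup>2)"
  have rhoL: "rho * L \<le> Ups" using rho L_pos by (simp add: field_simps)
  have per: "Lf (theta n + h m n) - Ls \<le> (1 - c) * (Lf (theta n) - Ls)" if m: "m \<in> {1..M}" for n m
  proof -
    define th where "th = theta n"
    define g where "g = gL th"
    define b where "b = gF m th - rho *\<^sub>R g"
    define G where "G v = F m (th + v) - b \<bullet> v" for v
    define I where "I = (INF v. G v)"
    define hh where "hh = h m n"
    have la: "G hh - I \<le> eps_loc * (G 0 - I)"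
      using local_acc[OF m, of n] unfolding Let_def G_def I_def b_def g_def gL_def th_def hh_def .
    have G0: "G 0 = F m th" unfolding G_def by simp
    have bv: "b \<bullet> v = gF m th \<bullet> v - rho * (g \<bullet> v)" for v
      unfolding b_def by (simp add: inner_diff_left)
    have Gsc: "G v \<ge> G 0 + rho * (g \<bullet> v) + Ups / 2 * (norm v)\<^sup>2" for v
      using sc[OF m, of th "th + v"] unfolding G0 by (simp add: G_def bv)
    have Gdesc: "G v \<le> G 0 + rho * (g \<bullet> v) + L / 2 * (norm v)\<^sup>2" for v
      using desc[OF m, of "th + v" th] unfolding G0 by (simp add: G_def bv)
    have Glb: "G v \<ge> G 0 - (rho * norm g)\<^sup>2 / (2 * Ups)" for v
    proof -
      have "- (rho * norm g * norm v) \<le> rho * (g \<bullet> v)"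
      proof -
        have "- (g \<bullet> v) \<le> norm g * norm v" using norm_cauchy_schwarz[of "-g" v] by simp
        then have "rho * (- (g \<bullet> v)) \<le> rho * (norm g * norm v)" using rho(1) by (intro mult_left_mono) auto
        then show ?thesis by (simp add: algebra_simps)
      qed
      moreover have "- ((rho * norm g)\<^sup>2) / (2 * Ups) \<le> Ups / 2 * (norm v)\<^sup>2 - (rho * norm g) * norm v"
        by (rule quad_lb[OF Ups_pos])
      ultimately show ?thesis using Gsc[of v] by simp
    qed
    have bdd: "bdd_below (range G)" using Glb by (intro bdd_belowI2) blast
    have I_le: "I \<le> G v" for v unfolding I_def by (rule cINF_lower[OF bdd]) simp
    have key: "I \<le> G 0 - rho\<^sup>2 * (norm g)\<^sup>2 / (2 * L)"
    proof -
      have "I \<le> G (- (rho / L) *\<^sub>R g)" by (rule I_le)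
      also have "\<dots> \<le> G 0 + rho * (g \<bullet> (- (rho / L) *\<^sub>R g)) + L / 2 * (norm (- (rho / L) *\<^sub>R g))\<^sup>2"
        by (rule Gdesc)
      also have "\<dots> = G 0 - rho\<^sup>2 * (norm g)\<^sup>2 / (2 * L)"
        using L_pos by (simp add: power2_norm_eq_inner[symmetric] power_mult_distrib field_simps power2_eq_square)
      finally show ?thesis .
    qed
    have f1: "G hh - G 0 \<le> - (1 - eps_loc) * (rho\<^sup>2 * (norm g)\<^sup>2 / (2 * L))"
    proof -
      have "(1 - eps_loc) * (rho\<^sup>2 * (norm g)\<^sup>2 / (2 * L)) \<le> (1 - eps_loc) * (G 0 - I)"
        using key eps_loc by (intro mult_left_mono) auto
      moreover have "G hh - G 0 \<le> - ((1 - eps_loc) * (G 0 - I))"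
        using la by (simp add: algebra_simps)
      ultimately show ?thesis by linarith
    qed
    have a: "G hh - G 0 \<ge> rho * (g \<bullet> hh) + Ups / 2 * (norm hh)\<^sup>2" using Gsc[of hh] by simp
    have bL: "Lf (th + hh) \<le> Lf th + g \<bullet> hh + L / 2 * (norm hh)\<^sup>2"
      using descL[of "th + hh" th] unfolding g_def by simp
    have "rho * (Lf (th + hh) - Lf th) \<le> rho * (g \<bullet> hh + L / 2 * (norm hh)\<^sup>2)"
      using bL rho(1) by (intro mult_left_mono) auto
    also have "\<dots> = rho * (g \<bullet> hh) + (rho * L) / 2 * (norm hh)\<^sup>2" by (simp add: algebra_simps)
    also have "\<dots> \<le> rho * (g \<bullet> hh) + Ups / 2 * (norm hh)\<^sup>2"
      using rhoL by (simp add: mult_right_mono)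
    also have "\<dots> \<le> - (1 - eps_loc) * (rho\<^sup>2 * (norm g)\<^sup>2 / (2 * L))" using a f1 by simp
    also have "\<dots> = rho * (- (1 - eps_loc) * rho * (norm g)\<^sup>2 / (2 * L))"
      by (simp add: power2_eq_square)
    finally have dec: "Lf (th + hh) - Lf th \<le> - (1 - eps_loc) * rho * (norm g)\<^sup>2 / (2 * L)"
      using rho(1) by (simp only: mult_le_cancel_left_pos)
    have pl: "Lf th - Ls \<le> (norm g)\<^sup>2 / (2 * Ups)"
    proof -
      have "- (norm g * norm (theta_star - th)) \<le> g \<bullet> (theta_star - th)"
        using norm_cauchy_schwarz[of "-g" "theta_star - th"] by simp
      moreover have "- ((norm g)\<^sup>2) / (2 * Ups) \<le> Ups / 2 * (norm (theta_star - th))\<^sup>2 - norm g * norm (theta_star - th)"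
        by (rule quad_lb[OF Ups_pos])
      ultimately show ?thesis using scL[of th theta_star] unfolding Ls_def g_def by simp
    qed
    have cq: "c * (Lf th - Ls) \<le> (1 - eps_loc) * rho * (norm g)\<^sup>2 / (2 * L)"
    proof -
      have "c * (Lf th - Ls) \<le> c * ((norm g)\<^sup>2 / (2 * Ups))"
        using pl eps_loc rho L_pos Ups_pos unfolding c_def by (intro mult_left_mono) auto
      also have "\<dots> = (1 - eps_loc) * rho * (norm g)\<^sup>2 / (2 * L)"
        unfolding c_def using Ups_pos L_pos by (simp add: field_simps)
      finally show ?thesis .
    qed
    have dec': "Lf (th + hh) - Lf th \<le> - ((1 - eps_loc) * rho * (norm g)\<^sup>2 / (2 * L))"
      using dec by (simp add: algebra_simps minus_divide_left)
    have "(1 - c) * (Lf th - Ls) = (Lf th - Ls) - c * (Lf th - Ls)" by (simp add: algebra_simps)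
    then have "Lf (th + hh) - Ls \<le> (1 - c) * (Lf th - Ls)" using cq dec' by linarith
    then show ?thesis unfolding th_def hh_def .
  qed
  have cc: "c' \<le> c"
  proof -
    have "c' = c * (Ups / (2 * L))" unfolding c_def c'_def using L_pos by (simp add: field_simps power2_eq_square)
    also have "\<dots> \<le> c * 1"
      using UL L_pos Ups_pos eps_loc rho unfolding c_def by (intro mult_left_mono) (auto simp: field_simps)
    finally show ?thesis by simp
  qed
  have c1: "c \<le> 1"
  proof -
    have "c \<le> 1 * rho * Ups / L" unfolding c_def using eps_loc rho Ups_pos L_pos
      by (intro divide_right_mono mult_right_mono) auto
    also have "\<dots> \<le> Ups / L * Ups / L" using rho Ups_pos L_pos
      by (intro divide_right_mono mult_right_mono) auto
    also have "\<dots> \<le> 1" using UL Ups_pos L_pos by (simp add: field_simps mult_mono)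
    finally show ?thesis .
  qed
  have c'pos: "0 < c'" unfolding c'_def using eps_loc rho Ups_pos L_pos by simp
  have step: "Lf (theta (Suc n)) - Ls \<le> (1 - c') * (Lf (theta n) - Ls)" for n
  proof -
    define th where "th = theta n"
    define H where "H = (\<Sum>m=1..M. h m n)"
    define z where "z = theta (Suc n)"
    have z: "z = th + (1 / real M) *\<^sub>R H" unfolding z_def th_def H_def by (rule update)
    have Mpos: "real M > 0" using M_pos by simp
    have cardM: "card {1..M} = M" by simp
    have sumz: "(\<Sum>m=1..M. th + h m n - z) = 0"
    proof -
      have "(\<Sum>m=1..M. th + h m n - z) = real M *\<^sub>R th + H - real M *\<^sub>R z"
        unfolding H_def by (simp add: sum.distrib sum_subtractf sum_constant_scaleR)
      also have "\<dots> = 0" unfolding z using Mpos by (simp add: scaleR_add_right)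
      finally show ?thesis .
    qed
    have "(\<Sum>m=1..M. Lf (th + h m n)) \<ge> (\<Sum>m=1..M. Lf z + gL z \<bullet> (th + h m n - z))"
    proof (rule sum_mono)
      fix m assume "m \<in> {1..M}"
      show "Lf z + gL z \<bullet> (th + h m n - z) \<le> Lf (th + h m n)"
      proof -
        have "0 \<le> Ups / 2 * (norm (th + h m n - z))\<^sup>2" using Ups_pos by simp
        then show ?thesis using scL[of z "th + h m n"] by linarith
      qed
    qed
    also have "(\<Sum>m=1..M. Lf z + gL z \<bullet> (th + h m n - z)) = real M * Lf z"
    proof -
      have "(\<Sum>m=1..M. gL z \<bullet> (th + h m n - z)) = gL z \<bullet> (\<Sum>m=1..M. th + h m n - z)"
        by (rule inner_sum_right[symmetric])
      also have "\<dots> = 0" by (simp only: sumz inner_zero_right)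
      finally show ?thesis by (simp only: sum.distrib) simp
    qed
    finally have j: "real M * Lf z \<le> (\<Sum>m=1..M. Lf (th + h m n))" .
    also have "\<dots> \<le> (\<Sum>m=1..M. Ls + (1 - c') * (Lf th - Ls))"
    proof (rule sum_mono)
      fix m assume m: "m \<in> {1..M}"
      have "(1 - c) * (Lf th - Ls) \<le> (1 - c') * (Lf th - Ls)"
        using cc Ls_min[of th] by (intro mult_right_mono) auto
      then show "Lf (th + h m n) \<le> Ls + (1 - c') * (Lf th - Ls)"
        using per[OF m, of n] unfolding th_def by simp
    qed
    also have "\<dots> = real M * (Ls + (1 - c') * (Lf th - Ls))" by simp
    finally have "real M * Lf z \<le> real M * (Ls + (1 - c') * (Lf th - Ls))" .
    then have "Lf z \<le> Ls + (1 - c') * (Lf th - Ls)" using Mpos by simp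
    then show ?thesis unfolding z_def th_def by simp
  qed
  have iter: "Lf (theta n) - Ls \<le> (1 - c') ^ n * (Lf (theta 0) - Ls)" for n
  proof (induction n)
    case 0 then show ?case by simp
  next
    case (Suc n)
    have "Lf (theta (Suc n)) - Ls \<le> (1 - c') * (Lf (theta n) - Ls)" by (rule step)
    also have "\<dots> \<le> (1 - c') * ((1 - c') ^ n * (Lf (theta 0) - Ls))"
      using Suc cc c1 by (intro mult_left_mono) auto
    finally show ?case by (simp add: mult.assoc)
  qed
  show ?thesis
  proof (intro allI impI)
    fix n :: nat
    assume n: "real n \<ge> 2 * L\<^sup>2 / (Ups\<^sup>2 * rho * (1 - eps_loc)) * ln (1 / eps_uav)"
    have "2 * L\<^sup>2 / (Ups\<^sup>2 * rho * (1 - eps_loc)) * ln (1 / eps_uav) = ln (1 / eps_uav) / c'"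
      unfolding c'_def by (simp add: field_simps)
    then have pw: "(1 - c') ^ n \<le> eps_uav"
      using n c'pos cc c1 eps_uav by (intro pow_exp_bound) auto
    have "Lf (theta n) - Ls \<le> (1 - c') ^ n * (Lf (theta 0) - Ls)" by (rule iter)
    also have "\<dots> \<le> eps_uav * (Lf (theta 0) - Ls)"
      using pw Ls_min[of "theta 0"] by (intro mult_right_mono) auto
    finally show "(\<Sum>m=1..M. w m * F m (theta n)) - (\<Sum>m=1..M. w m * F m theta_star)
             \<le> eps_uav * ((\<Sum>m=1..M. w m * F m (theta 0)) - (\<Sum>m=1..M. w m * F m theta_star))"
      unfolding Lf_def Ls_def .
  qed
qed

end
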